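(* Let $\mathcal{D}=\{1,\dots,n\}$ and let $U:2^{\mathcal{D}}\to\mathbb{R}_{\ge0}$ be monotone submodular with $U(\emptyset)=0$, $U(\{i\})>0$ for all $i$, and curvature $c\in[0,1]$. Let $v$ be a weighted-marginal data value as defined in the context (e.g. any semi-value, Data Shapley, Data Banzhaf, or leave-one-out). Order $\mathcal{D}$ in decreasing order of $v$ (ties broken arbitrarily) and let $G_k$ be the set of the first $k$ elements. For each $k$ let $OPT_k\in\operatorname{argmax}_{S\subseteq\mathcal{D},|S|\le k}U(S)$. Then for every $k\in\{1,\dots,n\}$, $$U(G_k)\ge(1-c)^2\,U(OPT_k),$$ and consequently, for every $K\le n$, $$\sum_{k=1}^K U(G_k)\ge (1-c)^2\sum_{k=1}^K U(OPT_k).$$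
   Context: $U$ is monotone if $U(A)\le U(B)$ whenever $A\subseteq B$, and submodular if $U(A\cup\{i\})-U(A)\ge U(B\cup\{i\})-U(B)$ whenever $A\subseteq B\subseteq\mathcal{D}$ and $i\in\mathcal{D}\setminus B$. The curvature of $U$ is $c=1-\min_{i\in\mathcal{D}}\frac{U(\mathcal{D})-U(\mathcal{D}\setminus\{i\})}{U(\{i\})}$. A weighted-marginal data value is $v(i)=\sum_{S\subseteq\mathcal{D}\setminus\{i\}}w_i(S)\,[U(S\cup\{i\})-U(S)]$, where for each $i$ the weights satisfy $w_i(S)\ge0$ and $\sum_{S\subseteq\mathcal{D}\setminus\{i\}}w_i(S)=1$. (Semi-values are the case $w_i(S)=\beta_{|S|}$ with $\beta_k\ge0$, $\sum_{k=0}^{n-1}\binom{n-1}{k}\beta_k=1$; leave-one-out is $w_i(S)=1$ iff $S=\mathcal{D}\setminus\{i\}$.) *)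

theory Defs
  imports Complex_Main
begin

definition monotone_setfun :: "'a set \<Rightarrow> ('a set \<Rightarrow> real) \<Rightarrow> bool" where
  "monotone_setfun D U \<longleftrightarrow> (\<forall>A B. A \<subseteq> B \<and> B \<subseteq> D \<longrightarrow> U A \<le> U B)"

definition submodular_setfun :: "'a set \<Rightarrow> ('a set \<Rightarrow> real) \<Rightarrow> bool" where
  "submodular_setfun D U \<longleftrightarrow>
     (\<forall>A B i. A \<subseteq> B \<and> B \<subseteq> D \<and> i \<in> D - B \<longrightarrow>
        U (A \<union> {i}) - U A \<ge> U (B \<union> {i}) - U B)"

definition curvature :: "'a set \<Rightarrow> ('a set \<Rightarrow> real) \<Rightarrow> real" where
  "curvature D U = 1 - Min ((\<lambda>i. (U D - U (D - {i})) / U {i}) ` D)"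

definition valid_weights :: "'a set \<Rightarrow> ('a \<Rightarrow> 'a set \<Rightarrow> real) \<Rightarrow> bool" where
  "valid_weights D w \<longleftrightarrow>
     (\<forall>i\<in>D. (\<forall>S\<in>Pow (D - {i}). w i S \<ge> 0) \<and> (\<Sum>S\<in>Pow (D - {i}). w i S) = 1)"

definition wm_value :: "'a set \<Rightarrow> ('a set \<Rightarrow> real) \<Rightarrow> ('a \<Rightarrow> 'a set \<Rightarrow> real) \<Rightarrow> 'a \<Rightarrow> real" where
  "wm_value D U w i = (\<Sum>S\<in>Pow (D - {i}). w i S * (U (S \<union> {i}) - U S))"

definition is_opt :: "'a set \<Rightarrow> ('a set \<Rightarrow> real) \<Rightarrow> nat \<Rightarrow> 'a set \<Rightarrow> bool" where
  "is_opt D U k S \<longleftrightarrow> S \<subseteq> D \<and> card S \<le> k \<and>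
     (\<forall>T. T \<subseteq> D \<and> card T \<le> k \<longrightarrow> U T \<le> U S)"

end

theory Submission
  imports Defs
begin

lemma sm_marg:
  assumes "submodular_setfun D U" "A \<subseteq> B" "B \<subseteq> D" "i \<in> D - B"
  shows "U (B \<union> {i}) - U B \<le> U (A \<union> {i}) - U A"
  using assms unfolding submodular_setfun_def by blast

lemma marg_upper:
  assumes "submodular_setfun D U" "U {} = 0" "S \<subseteq> D - {i}" "i \<in> D"
  shows "U (S \<union> {i}) - U S \<le> U {i}"
  using sm_marg[OF assms(1), of "{}" S i] assms by auto

lemma marg_lower:
  assumes "submodular_setfun D U" "S \<subseteq> D - {i}" "i \<in> D"
  shows "U D - U (D - {i}) \<le> U (S \<union> {i}) - U S"
proof -
  have "D - {i} \<union> {i} = D" using assms by auto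
  thus ?thesis using sm_marg[OF assms(1), of S "D - {i}" i] assms by auto
qed

lemma curv_bound:
  assumes "finite D" "i \<in> D" "U {i} > 0"
  shows "U D - U (D - {i}) \<ge> (1 - curvature D U) * U {i}"
proof -
  have "Min ((\<lambda>i. (U D - U (D - {i})) / U {i}) ` D) \<le> (U D - U (D - {i})) / U {i}"
    using assms by (intro Min_le) auto
  hence "1 - curvature D U \<le> (U D - U (D - {i})) / U {i}" unfolding curvature_def by simp
  thus ?thesis using assms(3) by (simp add: pos_le_divide_eq)
qed

lemma sub_add:
  assumes "submodular_setfun D U" "U {} = 0" "finite S" "S \<subseteq> D"
  shows "U S \<le> (\<Sum>i\<in>S. U {i})"
  using assms(3,4)
proof (induction S rule: finite_induct)
  case empty then show ?case using assms by simp
next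
  case (insert x F)
  have "U (F \<union> {x}) - U F \<le> U {x}"
    using insert by (intro marg_upper[OF assms(1,2)]) auto
  thus ?case using insert by simp
qed

lemma curv_lower:
  assumes "submodular_setfun D U" "finite D" "\<forall>i\<in>D. U {i} > 0" "U {} = 0" "S \<subseteq> D"
  shows "U S \<ge> (1 - curvature D U) * (\<Sum>i\<in>S. U {i})"
proof -
  have "finite S" using assms finite_subset by blast
  thus ?thesis using assms(5)
  proof (induction S rule: finite_induct)
    case empty then show ?case using assms by simp
  next
    case (insert x F)
    have "U D - U (D - {x}) \<le> U (F \<union> {x}) - U F"
      using insert by (intro marg_lower[OF assms(1)]) auto
    moreover have "U D - U (D - {x}) \<ge> (1 - curvature D U) * U {x}"
      using insert assms by (intro curv_bound) auto
    ultimately show ?case using insert by (simp add: algebra_simps)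
  qed
qed

lemma v_bounds:
  assumes "submodular_setfun D U" "finite D" "\<forall>i\<in>D. U {i} > 0" "U {} = 0"
    "valid_weights D w" "i \<in> D"
  shows "(1 - curvature D U) * U {i} \<le> wm_value D U w i \<and> wm_value D U w i \<le> U {i}"
proof -
  have W: "\<forall>S\<in>Pow (D - {i}). w i S \<ge> 0" "(\<Sum>S\<in>Pow (D - {i}). w i S) = 1"
    using assms(5,6) unfolding valid_weights_def by auto
  have "wm_value D U w i \<le> (\<Sum>S\<in>Pow (D - {i}). w i S * U {i})"
    unfolding wm_value_def
  proof (rule sum_mono)
    fix S assume S: "S \<in> Pow (D - {i})"
    have "U (S \<union> {i}) - U S \<le> U {i}" using S assms(6) by (intro marg_upper[OF assms(1,4)]) auto
    thus "w i S * (U (S \<union> {i}) - U S) \<le> w i S * U {i}" using W S by (simp add: mult_left_mono)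
  qed
  also have "\<dots> = (\<Sum>S\<in>Pow (D - {i}). w i S) * U {i}" by (rule sum_distrib_right[symmetric])
  also have "\<dots> = U {i}" using W(2) by simp
  finally have 1: "wm_value D U w i \<le> U {i}" .
  have "(1 - curvature D U) * U {i} \<le> U D - U (D - {i})"
    using curv_bound[OF assms(2,6)] assms(3,6) by blast
  also have "\<dots> = (\<Sum>S\<in>Pow (D - {i}). w i S) * (U D - U (D - {i}))" using W(2) by simp
  also have "\<dots> = (\<Sum>S\<in>Pow (D - {i}). w i S * (U D - U (D - {i})))"
    by (rule sum_distrib_right)
  also have "\<dots> \<le> wm_value D U w i"
    unfolding wm_value_def
  proof (rule sum_mono)
    fix S assume S: "S \<in> Pow (D - {i})"
    have "U D - U (D - {i}) \<le> U (S \<union> {i}) - U S" using S assms(6) by (intro marg_lower[OF assms(1)]) auto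
    thus "w i S * (U D - U (D - {i})) \<le> w i S * (U (S \<union> {i}) - U S)" using W S by (simp add: mult_left_mono)
  qed
  finally show ?thesis using 1 by simp
qed

lemma topk:
  fixes f :: "nat \<Rightarrow> real"
  assumes anti: "\<forall>j\<in>{1..n}. \<forall>l\<in>{1..n}. j \<le> l \<longrightarrow> f l \<le> f j"
    and nn: "\<forall>j\<in>{1..n}. f j \<ge> 0"
    and J: "J \<subseteq> {1..n}" "card J \<le> k" and k: "1 \<le> k" "k \<le> n"
  shows "(\<Sum>j\<in>J. f j) \<le> (\<Sum>j\<in>{1..k}. f j)"
proof -
  have fJ: "finite J" using J finite_subset by blast
  let ?A = "J - {1..k}" and ?B = "{1..k} - J" and ?C = "J \<inter> {1..k}"
  have s1: "(\<Sum>j\<in>J. f j) = (\<Sum>j\<in>?C. f j) + (\<Sum>j\<in>?A. f j)"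
    using sum.Int_Diff[OF fJ, of f "{1..k}"] by simp
  have s2: "(\<Sum>j\<in>{1..k}. f j) = (\<Sum>j\<in>?C. f j) + (\<Sum>j\<in>?B. f j)"
    using sum.Int_Diff[of "{1..k}" f J] by (simp add: Int_commute)
  have "card J = card ?C + card ?A" using card_Int_Diff[OF fJ, of "{1..k}"] by simp
  moreover have "card {1..k} = card ?C + card ?B"
    using card_Int_Diff[of "{1..k}" J] by (simp add: Int_commute)
  ultimately have cAB: "card ?A \<le> card ?B" using J by simp
  have "(\<Sum>j\<in>?A. f j) \<le> (\<Sum>j\<in>?A. f k)"
    using J k anti by (intro sum_mono) auto
  also have "\<dots> = real (card ?A) * f k" by simp
  also have "\<dots> \<le> real (card ?B) * f k"
    using cAB nn k by (intro mult_right_mono) auto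
  also have "\<dots> = (\<Sum>j\<in>?B. f k)" by simp
  also have "\<dots> \<le> (\<Sum>j\<in>?B. f j)"
    using J k anti by (intro sum_mono) auto
  finally show ?thesis using s1 s2 by simp
qed

theorem theorem4p3:
  fixes n :: nat and U :: "nat set \<Rightarrow> real" and w :: "nat \<Rightarrow> nat set \<Rightarrow> real"
    and \<sigma> :: "nat \<Rightarrow> nat" and OPT :: "nat \<Rightarrow> nat set"
  defines "D \<equiv> {1..n}"
  defines "v \<equiv> wm_value D U w"
  defines "c \<equiv> curvature D U"
  defines "G \<equiv> (\<lambda>k. \<sigma> ` {1..k})"
  assumes nonneg: "\<forall>S\<subseteq>D. U S \<ge> 0"
    and mono: "monotone_setfun D U"
    and submod: "submodular_setfun D U"
    and empty: "U {} = 0"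
    and single: "\<forall>i\<in>D. U {i} > 0"
    and c_range: "0 \<le> c \<and> c \<le> 1"
    and weights: "valid_weights D w"
    and perm: "bij_betw \<sigma> {1..n} D"
    and sorted: "\<forall>j\<in>{1..n}. \<forall>l\<in>{1..n}. j \<le> l \<longrightarrow> v (\<sigma> l) \<le> v (\<sigma> j)"
    and opt: "\<forall>k\<in>{1..n}. is_opt D U k (OPT k)"
  shows "(\<forall>k\<in>{1..n}. U (G k) \<ge> (1 - c)^2 * U (OPT k)) \<and>
         (\<forall>K\<le>n. (\<Sum>k=1..K. U (G k)) \<ge> (1 - c)^2 * (\<Sum>k=1..K. U (OPT k)))"
proof -
  have fD: "finite D" unfolding D_def by simp
  have c0: "0 \<le> 1 - c" using c_range by simp
  have vb: "\<And>i. i \<in> D \<Longrightarrow> (1 - c) * U {i} \<le> v i \<and> v i \<le> U {i}"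
    unfolding v_def c_def by (rule v_bounds[OF submod fD single empty weights])
  have vnn: "\<And>i. i \<in> D \<Longrightarrow> 0 \<le> v i"
  proof -
    fix i assume i: "i \<in> D"
    have "0 \<le> (1 - c) * U {i}" using c0 single i by (simp add: less_imp_le)
    thus "0 \<le> v i" using vb[OF i] by linarith
  qed
  have inj: "inj_on \<sigma> {1..n}" by (rule bij_betw_imp_inj_on[OF perm])
  have img: "\<sigma> ` {1..n} = D" by (rule bij_betw_imp_surj_on[OF perm])
  have main: "U (G k) \<ge> (1 - c)^2 * U (OPT k)" if k: "k \<in> {1..n}" for k
  proof -
    have GD: "G k \<subseteq> D" unfolding G_def using k img by auto
    have O: "OPT k \<subseteq> D" "card (OPT k) \<le> k" using opt k unfolding is_opt_def by auto
    define J where "J = {j\<in>{1..n}. \<sigma> j \<in> OPT k}"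
    have OJ: "OPT k = \<sigma> ` J" unfolding J_def using O img by auto
    have injJ: "inj_on \<sigma> J" using inj unfolding J_def by (rule inj_on_subset) auto
    have cJ: "card J \<le> k" using O OJ card_image[OF injJ] by simp
    have injk: "inj_on \<sigma> {1..k}" using k by (intro inj_on_subset[OF inj]) auto
    have "(\<Sum>i\<in>OPT k. v i) = (\<Sum>j\<in>J. v (\<sigma> j))" using OJ sum.reindex[OF injJ] by simp
    also have "\<dots> \<le> (\<Sum>j\<in>{1..k}. v (\<sigma> j))"
      using sorted vnn img k cJ by (intro topk[where n=n]) (auto simp: J_def)
    also have "\<dots> = (\<Sum>i\<in>G k. v i)" unfolding G_def sum.reindex[OF injk] by (simp add: comp_def)
    finally have sv: "(\<Sum>i\<in>OPT k. v i) \<le> (\<Sum>i\<in>G k. v i)" .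
    have fO: "finite (OPT k)" using fD O(1) finite_subset by blast
    have "(1 - c) * U (OPT k) \<le> (1 - c) * (\<Sum>i\<in>OPT k. U {i})"
      using mult_left_mono[OF sub_add[OF submod empty fO O(1)] c0] .
    also have "\<dots> = (\<Sum>i\<in>OPT k. (1 - c) * U {i})" by (simp add: sum_distrib_left)
    also have "\<dots> \<le> (\<Sum>i\<in>OPT k. v i)" using vb O(1) by (intro sum_mono) auto
    also have "\<dots> \<le> (\<Sum>i\<in>G k. v i)" by (rule sv)
    also have "\<dots> \<le> (\<Sum>i\<in>G k. U {i})" using vb GD by (intro sum_mono) auto
    finally have X: "(1 - c) * U (OPT k) \<le> (\<Sum>i\<in>G k. U {i})" .
    have "(1 - c) * ((1 - c) * U (OPT k)) \<le> (1 - c) * (\<Sum>i\<in>G k. U {i})"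
      using mult_left_mono[OF X c0] .
    also have "\<dots> \<le> U (G k)"
      using curv_lower[OF submod fD single empty GD] unfolding c_def by simp
    finally show ?thesis by (simp add: power2_eq_square mult.assoc)
  qed
  moreover have "(\<Sum>k=1..K. U (G k)) \<ge> (1 - c)^2 * (\<Sum>k=1..K. U (OPT k))" if "K \<le> n" for K
  proof -
    have "(1 - c)^2 * (\<Sum>k=1..K. U (OPT k)) = (\<Sum>k=1..K. (1 - c)^2 * U (OPT k))"
      by (simp add: sum_distrib_left)
    also have "\<dots> \<le> (\<Sum>k=1..K. U (G k))" using main that by (intro sum_mono) auto
    finally show ?thesis .
  qed
  ultimately show ?thesis by blast
qed

end
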